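(* Let $a\ge2$ and $0\le\mu\le a-1$ be integers, $n\ge0$ an integer, and $u\in\mathbb R$. Let $F(n,t)=\dfrac{n!^a}{\Gamma^{a-1}(t+1)\Gamma^a(n-t+1)}$, $$I_{n,\mu}(u)=\frac1{2\pi i}\int_L F(n,t)\Bigl(\frac{\pi}{\sin\pi t}\Bigr)^{\mu+1}e^{i\pi tu}\,dt,$$ where $L$ is a loop beginning and ending at $-\infty$ and encircling the points $n,n-1,n-2,\ldots$ once in the positive direction, and $$\widetilde I_{n,\mu}(u)=\sum_{k=0}^n\operatorname{res}_{t=k}\Bigl(F(n,t)\Bigl(\frac{\pi}{\sin\pi t}\Bigr)^{\mu+1}e^{i\pi tu}\Bigr).$$ Then $\widetilde I_{n,\mu}(u)=I_{n,\mu}(u)$ if $0\le\mu\le a-2$, and $\widetilde I_{n,a-1}(u)=I_{n,a-1}(u)+O(n^{-a})$ where the constant in $O$ is absolute. *)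

theory Defs
  imports "HOL-Complex_Analysis.Complex_Analysis" "HOL-Analysis.Gamma_Function"
begin

text \<open>F(n,t) = n!^a / (Gamma(t+1)^(a-1) Gamma(n-t+1)^a), written with the
  reciprocal Gamma function rGamma = 1/Gamma (entire).\<close>
definition FF :: "nat \<Rightarrow> nat \<Rightarrow> complex \<Rightarrow> complex" where
  "FF a n t = (fact n) ^ a * rGamma (t + 1) ^ (a - 1) * rGamma (of_nat n - t + 1) ^ a"

definition integrand :: "nat \<Rightarrow> nat \<Rightarrow> nat \<Rightarrow> real \<Rightarrow> complex \<Rightarrow> complex" where
  "integrand a mu n u t =
     FF a n t * (of_real pi / sin (of_real pi * t)) ^ (mu + 1) * exp (\<i> * of_real pi * t * of_real u)"

text \<open>Truncation at Re t = -R of the loop L: from -R - i along Im t = -1 to n + 1/2 - i,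
  up to n + 1/2 + i, and back along Im t = 1 to -R + i (positive orientation
  around n, n-1, n-2, ...).\<close>
definition loop_trunc :: "nat \<Rightarrow> real \<Rightarrow> real \<Rightarrow> complex" where
  "loop_trunc n R =
     linepath (Complex (-R) (-1)) (Complex (real n + 1/2) (-1)) +++
     linepath (Complex (real n + 1/2) (-1)) (Complex (real n + 1/2) 1) +++
     linepath (Complex (real n + 1/2) 1) (Complex (-R) 1)"

definition I_loop :: "nat \<Rightarrow> nat \<Rightarrow> nat \<Rightarrow> real \<Rightarrow> complex" where
  "I_loop a mu n u =
     Lim at_top (\<lambda>R::real. contour_integral (loop_trunc n R) (integrand a mu n u) / (2 * of_real pi * \<i>))"

definition I_tilde :: "nat \<Rightarrow> nat \<Rightarrow> nat \<Rightarrow> real \<Rightarrow> complex" where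
  "I_tilde a mu n u = (\<Sum>k = 0..n. residue (integrand a mu n u) (of_nat k))"

end

theory Submission
  imports Defs
begin


lemma rGamma_decay_aux:
  "\<exists>M\<ge>0. \<forall>z::complex. 2 \<le> Re z \<longrightarrow> \<bar>Im z\<bar> \<le> 1 \<longrightarrow> norm (rGamma z) * (Re z - 2) \<le> M"
proof -
  have "compact (rGamma ` cbox (Complex 1 (-1)) (Complex 2 1))"
    by (intro compact_continuous_image continuous_on_rGamma compact_cbox)
  then obtain M where M: "\<And>w. w \<in> cbox (Complex 1 (-1)) (Complex 2 1) \<Longrightarrow> norm (rGamma w) \<le> M"
  proof -
    from compact_imp_bounded[OF \<open>compact _\<close>] obtain B where
      "\<forall>x\<in>rGamma ` cbox (Complex 1 (-1)) (Complex 2 1). norm x \<le> B" unfolding bounded_iff by blast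
    thus ?thesis using that by blast
  qed
  have "Complex 1 0 \<in> cbox (Complex 1 (-1)) (Complex 2 1)" by (simp add: in_cbox_complex_iff)
  hence M0: "M \<ge> 0" using M[of "Complex 1 0"] norm_ge_zero[of "rGamma (Complex 1 0)"]
    by linarith
  show ?thesis
  proof (intro exI[of _ M] conjI allI impI M0)
    fix z :: complex assume z: "2 \<le> Re z" "\<bar>Im z\<bar> \<le> 1"
    define m where "m = nat \<lfloor>Re z\<rfloor> - 1"
    have fl: "2 \<le> \<lfloor>Re z\<rfloor>" using z by linarith
    have mr: "real m = real_of_int \<lfloor>Re z\<rfloor> - 1" proof -
      have "1 \<le> nat \<lfloor>Re z\<rfloor>" using fl by linarith
      hence "real m = real (nat \<lfloor>Re z\<rfloor>) - 1" unfolding m_def by (simp add: of_nat_diff)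
      thus ?thesis using fl by simp
    qed
    define w where "w = z - of_nat m"
    have Rew: "Re w = Re z - m" "Im w = Im z" by (simp_all add: w_def)
    have "1 \<le> Re w" "Re w \<le> 2" using Rew mr of_int_floor_le[of "Re z"] real_of_int_floor_gt_diff_one[of "Re z"]
      by linarith+
    hence wbox: "w \<in> cbox (Complex 1 (-1)) (Complex 2 1)" using z Rew by (auto simp: in_cbox_complex_iff)
    have eq: "rGamma w = pochhammer w m * rGamma z"
      using pochhammer_rGamma[of w m] by (simp add: w_def)
    have "fact m \<le> norm (pochhammer w m)"
    proof -
      have "(fact m :: real) = (\<Prod>i\<in>{0..<m}. real (Suc i))" by (simp add: fact_prod_Suc)
      also have "\<dots> \<le> (\<Prod>i\<in>{0..<m}. norm (w + of_nat i))"
      proof (rule prod_mono)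
        fix i assume "i \<in> {0..<m}"
        have "real (Suc i) \<le> Re (w + of_nat i)" using \<open>1 \<le> Re w\<close> by simp
        also have "\<dots> \<le> norm (w + of_nat i)" by (rule complex_Re_le_cmod)
        finally show "0 \<le> real (Suc i) \<and> real (Suc i) \<le> norm (w + of_nat i)" by simp
      qed
      also have "\<dots> = norm (pochhammer w m)" by (simp add: pochhammer_prod prod_norm)
      finally show ?thesis .
    qed
    moreover have "real m \<le> fact m"
    proof -
      have "real m \<le> real (fact m)" using fact_ge_self[of m] by (simp only: of_nat_le_iff)
      thus ?thesis by simp
    qed
    ultimately have "real m \<le> norm (pochhammer w m)" by linarith
    moreover have "Re z - 2 \<le> real m" using mr by linarith
    ultimately have "Re z - 2 \<le> norm (pochhammer w m)" by linarith
    hence "norm (rGamma z) * (Re z - 2) \<le> norm (rGamma z) * norm (pochhammer w m)"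
      by (intro mult_left_mono) auto
    also have "\<dots> = norm (rGamma w)" by (simp add: eq norm_mult)
    also have "\<dots> \<le> M" by (rule M[OF wbox])
    finally show "norm (rGamma z) * (Re z - 2) \<le> M" .
  qed
qed

lemma rGamma_decay:
  assumes "e > 0"
  shows "\<exists>X. \<forall>z::complex. X \<le> Re z \<longrightarrow> \<bar>Im z\<bar> \<le> 1 \<longrightarrow> norm (rGamma z) \<le> e"
proof -
  obtain M where M: "M \<ge> 0" "\<And>z::complex. 2 \<le> Re z \<Longrightarrow> \<bar>Im z\<bar> \<le> 1 \<Longrightarrow> norm (rGamma z) * (Re z - 2) \<le> M"
    using rGamma_decay_aux by blast
  show ?thesis
  proof (intro exI[of _ "3 + M / e"] allI impI)
    fix z :: complex assume z: "3 + M / e \<le> Re z" "\<bar>Im z\<bar> \<le> 1"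
    have "0 \<le> M / e" using M assms by simp
    hence h: "2 \<le> Re z" "M / e < Re z - 2" using z by linarith+
    have "norm (rGamma z) * (Re z - 2) \<le> M" using M(2)[OF h(1) z(2)] .
    moreover have "M < e * (Re z - 2)" using h(2) assms by (simp add: divide_less_eq mult.commute)
    ultimately have "norm (rGamma z) * (Re z - 2) \<le> e * (Re z - 2)" by linarith
    thus "norm (rGamma z) \<le> e" proof -
      have "0 < Re z - 2" using h \<open>0 \<le> M / e\<close> by linarith
      thus ?thesis using \<open>norm (rGamma z) * (Re z - 2) \<le> e * (Re z - 2)\<close> by (simp add: mult_le_cancel_right_pos)
    qed
  qed
qed



lemma rGamma_t1: fixes t :: complex shows "rGamma (t + 1) * rGamma (- t) = - sin (of_real pi * t) / of_real pi"
proof -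
  have "rGamma (t + 1) * rGamma (1 - (t + 1)) = sin (of_real pi * (t + 1)) / of_real pi"
    by (rule rGamma_reflection_complex)
  moreover have "sin (of_real pi * (t + 1)) = - sin (of_real pi * t)"
  proof -
    have e1: "of_real pi * (t + 1) = of_real pi * t + of_real pi" by (simp add: distrib_left)
    have c: "cos (complex_of_real pi) = -1" by (subst cos_of_real) simp
    have s: "sin (complex_of_real pi) = 0" by (subst sin_of_real) simp
    show ?thesis unfolding e1 sin_add c s by simp
  qed
  ultimately show ?thesis by simp
qed

lemma rGamma_shift_le:
  fixes t :: complex
  assumes "Re t \<le> -1"
  shows "norm (rGamma (of_nat n - t + 1)) \<le> norm (rGamma (- t))"
proof -
  have eq: "rGamma (- t) = pochhammer (- t) (Suc n) * rGamma (of_nat n - t + 1)"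
    using pochhammer_rGamma[of "-t" "Suc n"] by (simp add: algebra_simps)
  have "1 \<le> norm (pochhammer (- t) (Suc n))"
  proof -
    have "(1::real) = (\<Prod>i\<in>{0..<Suc n}. 1)" by simp
    also have "\<dots> \<le> (\<Prod>i\<in>{0..<Suc n}. norm (- t + of_nat i))"
    proof (rule prod_mono)
      fix i assume "i \<in> {0..<Suc n}"
      have "1 \<le> Re (- t + of_nat i)" using assms by simp
      also have "\<dots> \<le> norm (- t + of_nat i)" by (rule complex_Re_le_cmod)
      finally show "0 \<le> (1::real) \<and> 1 \<le> norm (- t + of_nat i)" by simp
    qed
    also have "\<dots> = norm (pochhammer (- t) (Suc n))" by (simp add: pochhammer_prod prod_norm)
    finally show ?thesis .
  qed
  hence "norm (rGamma (of_nat n - t + 1)) * 1 \<le> norm (rGamma (of_nat n - t + 1)) * norm (pochhammer (- t) (Suc n))"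
    by (intro mult_left_mono) auto
  also have "\<dots> = norm (rGamma (- t))" by (simp add: eq norm_mult)
  finally show ?thesis by simp
qed

lemma integrand_bound:
  fixes t :: complex
  assumes a: "1 \<le> a" and t: "Re t \<le> -1" "\<bar>Im t\<bar> \<le> 1" "1 \<le> norm (sin (of_real pi * t))"
  shows "norm (integrand a mu n u t) \<le>
           fact n ^ a * exp pi ^ (a - 1) * pi ^ (mu + 1) * exp (pi * \<bar>u\<bar>) * norm (rGamma (- t))"
proof -
  define s where "s = sin (of_real pi * t)"
  define r where "r = norm (rGamma (- t))"
  have s1: "1 \<le> norm s" using t by (simp add: s_def)
  have sle: "norm s \<le> exp pi"
  proof -
    have "norm s \<le> exp \<bar>Im (of_real pi * t)\<bar>"
      using cmod_sin_le_exp[of 1 "of_real pi * t"] by (simp add: s_def)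
    also have "\<bar>Im (of_real pi * t)\<bar> = pi * \<bar>Im t\<bar>" by (simp add: abs_mult)
    also have "\<dots> \<le> pi" using t(2) by (simp add: mult_le_cancel_left1)
    finally show ?thesis by simp
  qed
  have r0: "0 \<le> r" by (simp add: r_def)
  have shift: "norm (rGamma (of_nat n - t + 1)) \<le> r" unfolding r_def by (rule rGamma_shift_le[OF t(1)])
  have refl: "norm (rGamma (t + 1)) * r = norm s / pi"
    using arg_cong[OF rGamma_t1[of t], of norm] by (simp add: r_def s_def norm_mult norm_divide)
  have a1: "a = Suc (a - 1)" using a by simp
  have "norm (FF a n t) = fact n ^ a * norm (rGamma (t + 1)) ^ (a - 1) * norm (rGamma (of_nat n - t + 1)) ^ a"
    by (simp add: FF_def norm_mult norm_power norm_fact)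
  also have "\<dots> \<le> fact n ^ a * norm (rGamma (t + 1)) ^ (a - 1) * (r ^ (a - 1) * r)"
  proof -
    have "norm (rGamma (of_nat n - t + 1)) ^ a \<le> r ^ a" by (intro power_mono shift) simp
    also have "r ^ a = r ^ (a - 1) * r" by (subst a1) (simp add: mult.commute)
    finally show ?thesis by (intro mult_left_mono) auto
  qed
  also have "\<dots> = fact n ^ a * (norm (rGamma (t + 1)) * r) ^ (a - 1) * r"
    by (simp add: power_mult_distrib)
  also have "\<dots> = fact n ^ a * (norm s / pi) ^ (a - 1) * r" by (simp add: refl)
  also have "\<dots> \<le> fact n ^ a * exp pi ^ (a - 1) * r"
  proof -
    have "norm s / pi \<le> norm s / 1"
      using s1 pi_gt3 by (intro divide_left_mono) auto
    hence "norm s / pi \<le> exp pi" using sle by simp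
    hence "(norm s / pi) ^ (a - 1) \<le> exp pi ^ (a - 1)" by (intro power_mono) auto
    thus ?thesis using r0 by (intro mult_right_mono mult_left_mono) auto
  qed
  finally have F: "norm (FF a n t) \<le> fact n ^ a * exp pi ^ (a - 1) * r" .
  have P: "norm ((of_real pi / s) ^ (mu + 1)) \<le> pi ^ (mu + 1)"
  proof -
    have "pi / norm s \<le> pi / 1" using s1 pi_gt3 by (intro divide_left_mono) auto
    hence "norm (of_real pi / s) \<le> pi" by (simp add: norm_divide)
    thus ?thesis unfolding norm_power by (intro power_mono) auto
  qed
  have E: "norm (exp (\<i> * of_real pi * t * of_real u)) \<le> exp (pi * \<bar>u\<bar>)"
  proof -
    have "Re (\<i> * of_real pi * t * of_real u) = - pi * u * Im t" by simp
    also have "\<dots> \<le> pi * \<bar>u\<bar>"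
    proof -
      have "\<bar>u * Im t\<bar> \<le> \<bar>u\<bar>" using t(2) by (simp add: abs_mult mult_left_le)
      hence "- (u * Im t) \<le> \<bar>u\<bar>" by linarith
      hence "pi * (- (u * Im t)) \<le> pi * \<bar>u\<bar>" by (intro mult_left_mono) auto
      thus ?thesis by (simp add: algebra_simps)
    qed
    finally show ?thesis by simp
  qed
  have "norm (integrand a mu n u t) = norm (FF a n t) * norm ((of_real pi / s) ^ (mu + 1)) * norm (exp (\<i> * of_real pi * t * of_real u))"
    by (simp only: integrand_def s_def norm_mult)
  also have "\<dots> \<le> (fact n ^ a * exp pi ^ (a - 1) * r) * pi ^ (mu + 1) * exp (pi * \<bar>u\<bar>)"
    by (intro mult_mono F P E) (use r0 in auto)
  finally show ?thesis by (simp add: r_def mult_ac)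
qed



lemma sin_pi_eq_0_iff:
  fixes t :: complex
  shows "sin (of_real pi * t) = 0 \<longleftrightarrow> t \<in> \<int>"
proof
  assume "sin (of_real pi * t) = 0"
  then obtain k :: int where "of_real pi * t = of_real (k * pi)" by (auto simp: sin_eq_0)
  hence "t = of_int k" by (simp add: mult.commute)
  thus "t \<in> \<int>" by simp
next
  assume "t \<in> \<int>"
  then obtain k :: int where "t = of_int k" by (auto elim: Ints_cases)
  hence "of_real pi * t = of_real (k * pi)" by (simp add: mult.commute)
  thus "sin (of_real pi * t) = 0" by (simp only: sin_eq_0) blast
qed

lemma Ints_complex_Im: "(t::complex) \<in> \<int> \<Longrightarrow> Im t = 0 \<and> Re t \<in> \<int>"
  by (auto elim!: Ints_cases)

lemma integrand_holo:
  "integrand a mu n u holomorphic_on {t. sin (of_real pi * t) \<noteq> 0}"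
  unfolding integrand_def FF_def by (intro holomorphic_intros) auto

lemma open_sin_ne: "open {t::complex. sin (of_real pi * t) \<noteq> 0}"
  by (intro open_Collect_neq continuous_intros)

lemma Re_pos_not_nonpos_Ints: "0 < Re (w::complex) \<Longrightarrow> w \<notin> \<int>\<^sub>\<le>\<^sub>0"
  by (auto elim!: nonpos_Ints_cases')

definition hh :: "nat \<Rightarrow> nat \<Rightarrow> real \<Rightarrow> complex \<Rightarrow> complex" where
  "hh a n u t = fact n ^ a * (-1) ^ (a - 1) * Gamma (- t) ^ (a - 1) * rGamma (of_nat n - t + 1) ^ a
                 * exp (\<i> * of_real pi * t * of_real u)"

lemma hh_holo: "hh a n u holomorphic_on {t. Re t < 0}"
  unfolding hh_def by (intro holomorphic_intros) (auto elim!: nonpos_Ints_cases')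

lemma integrand_eq_hh:
  fixes t :: complex
  assumes "Re t < 0" "sin (of_real pi * t) \<noteq> 0"
  shows "integrand a mu n u t = hh a n u t * (sin (of_real pi * t) / of_real pi) ^ (a - 1)
                                 / (sin (of_real pi * t) / of_real pi) ^ (mu + 1)"
proof -
  define s where "s = sin (of_real pi * t) / of_real pi"
  have s0: "s \<noteq> 0" using assms(2) by (simp add: s_def)
  have G: "Gamma (- t) * rGamma (- t) = 1"
    using Re_pos_not_nonpos_Ints[of "-t"] assms(1) by (simp add: rGamma_inverse_Gamma Gamma_eq_zero_iff)
  have r: "rGamma (t + 1) = - s * Gamma (- t)"
  proof -
    have "rGamma (t + 1) = rGamma (t + 1) * (rGamma (- t) * Gamma (- t))" using G by (simp add: mult.commute)
    also have "\<dots> = (rGamma (t + 1) * rGamma (- t)) * Gamma (- t)" by (simp add: mult.assoc)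
    also have "\<dots> = - s * Gamma (- t)" by (simp add: rGamma_t1 s_def)
    finally show ?thesis .
  qed
  have ps: "(of_real pi / sin (of_real pi * t)) ^ (mu + 1) = 1 / s ^ (mu + 1)"
    by (simp add: s_def power_divide)
  have "integrand a mu n u t = fact n ^ a * (- s * Gamma (- t)) ^ (a - 1) * rGamma (of_nat n - t + 1) ^ a
            * (1 / s ^ (mu + 1)) * exp (\<i> * of_real pi * t * of_real u)"
    unfolding integrand_def FF_def r ps ..
  also have "\<dots> = hh a n u t * s ^ (a - 1) / s ^ (mu + 1)"
  proof -
    have "(- s * Gamma (- t)) ^ (a-1) = (-1)^(a-1) * s^(a-1) * Gamma(-t)^(a-1)"
      by (simp only: power_mult_distrib power_minus[of s])
    thus ?thesis unfolding hh_def divide_inverse by (simp only: mult_ac mult_1_left)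
  qed
  finally show ?thesis by (simp add: s_def)
qed

lemma residue_neg_zero:
  assumes "mu + 2 \<le> a"
  shows "residue (integrand a mu n u) (- of_nat (Suc k)) = 0"
proof -
  define z :: complex where "z = - of_nat (Suc k)"
  define g where "g = (\<lambda>t. hh a n u t * (sin (of_real pi * t) / of_real pi) ^ (a - 2 - mu))"
  have ev: "eventually (\<lambda>t. integrand a mu n u t = g t) (at z)"
  proof -
    have "eventually (\<lambda>t. t \<in> ball z (1/2) \<and> t \<noteq> z \<and> t \<in> UNIV) (at z within UNIV)"
      by (rule eventually_at_ball') simp
    thus ?thesis
    proof (rule eventually_mono)
      fix t assume t: "t \<in> ball z (1/2) \<and> t \<noteq> z \<and> t \<in> UNIV"
      have d: "norm (t - z) < 1/2" using t by (simp add: dist_norm norm_minus_commute)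
      have "\<bar>Re t - Re z\<bar> < 1/2" using d abs_Re_le_cmod[of "t - z"] by simp
      moreover have "Re z = - real (Suc k)" by (simp add: z_def)
      moreover have "real (Suc k) \<ge> 1" by simp
      ultimately have Ret: "Re t < 0" by linarith
      have "sin (of_real pi * t) \<noteq> 0"
      proof
        assume "sin (of_real pi * t) = 0"
        hence "t \<in> \<int>" by (simp add: sin_pi_eq_0_iff)
        then obtain j :: int where j: "t = of_int j" by (auto elim: Ints_cases)
        have "norm (of_int j - z) < 1/2" using d j by simp
        also have "of_int j - z = of_int (j + int (Suc k))" by (simp add: z_def)
        finally have "\<bar>real_of_int (j + int (Suc k))\<bar> < 1/2"
          by (metis norm_of_int)
        hence "j + int (Suc k) = 0" by linarith
        hence "j = - int (Suc k)" by linarith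
        hence "t = z" using j by (simp add: z_def)
        thus False using t by simp
      qed
      moreover have "a - 1 = (a - 2 - mu) + (mu + 1)" using assms by simp
      ultimately show "integrand a mu n u t = g t"
      proof -
        assume sn: "sin (of_real pi * t) \<noteq> 0" and ae: "a - 1 = (a - 2 - mu) + (mu + 1)"
        define q where "q = sin (of_real pi * t) / of_real pi"
        have q0: "q ^ (mu + 1) \<noteq> 0" using sn by (simp add: q_def)
        have "integrand a mu n u t = hh a n u t * q ^ (a - 1) / q ^ (mu + 1)"
          using integrand_eq_hh[OF Ret sn] by (simp add: q_def)
        also have "\<dots> = hh a n u t * q ^ (a - 2 - mu) * (q ^ (mu + 1) / q ^ (mu + 1))"
          by (simp only: ae power_add mult_ac times_divide_eq_right)
        also have "\<dots> = g t" using q0 by (simp add: g_def q_def)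
        finally show ?thesis .
      qed
    qed
  qed
  have "residue (integrand a mu n u) z = residue g z" by (rule residue_cong[OF ev refl])
  also have "\<dots> = 0"
  proof (rule residue_holo[of "{t. Re t < 0}"])
    show "open {t::complex. Re t < 0}" by (intro open_Collect_less continuous_intros)
    show "z \<in> {t. Re t < 0}" by (simp add: z_def)
    show "g holomorphic_on {t. Re t < 0}" unfolding g_def by (intro holomorphic_intros hh_holo) auto
  qed
  finally show ?thesis by (simp add: z_def)
qed



lemma near_neg_int:
  "eventually (\<lambda>t. Re t < 0 \<and> sin (of_real pi * t) \<noteq> 0) (at (- of_nat (Suc k) :: complex))"
proof -
  define z :: complex where "z = - of_nat (Suc k)"
  have "eventually (\<lambda>t. t \<in> ball z (1/2) \<and> t \<noteq> z \<and> t \<in> UNIV) (at z within UNIV)"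
    by (rule eventually_at_ball') simp
  hence "eventually (\<lambda>t. Re t < 0 \<and> sin (of_real pi * t) \<noteq> 0) (at z)"
  proof (rule eventually_mono)
    fix t assume t: "t \<in> ball z (1/2) \<and> t \<noteq> z \<and> t \<in> UNIV"
    have d: "norm (t - z) < 1/2" using t by (simp add: dist_norm norm_minus_commute)
    have "\<bar>Re t - Re z\<bar> < 1/2" using d abs_Re_le_cmod[of "t - z"] by simp
    moreover have "Re z = - real (Suc k)" by (simp add: z_def)
    moreover have "real (Suc k) \<ge> 1" by simp
    ultimately have Ret: "Re t < 0" by linarith
    have "sin (of_real pi * t) \<noteq> 0"
    proof
      assume "sin (of_real pi * t) = 0"
      hence "t \<in> \<int>" by (simp add: sin_pi_eq_0_iff)
      then obtain j :: int where j: "t = of_int j" by (auto elim: Ints_cases)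
      have "norm (of_int j - z) < 1/2" using d j by simp
      also have "of_int j - z = of_int (j + int (Suc k))" by (simp add: z_def)
      finally have "\<bar>real_of_int (j + int (Suc k))\<bar> < 1/2"
        by (metis norm_of_int)
      hence "j + int (Suc k) = 0" by linarith
      hence "j = - int (Suc k)" by linarith
      hence "t = z" using j by (simp add: z_def)
      thus False using t by simp
    qed
    thus "Re t < 0 \<and> sin (of_real pi * t) \<noteq> 0" using Ret by simp
  qed
  thus ?thesis by (simp add: z_def)
qed

lemma residue_neg_simple:
  assumes a: "1 \<le> a"
  shows "norm (residue (integrand a (a - 1) n u) (- of_nat (Suc k)))
           = fact n ^ a * fact k ^ (a - 1) / fact (n + Suc k) ^ a"
proof -
  define z :: complex where "z = - of_nat (Suc k)"
  define g where "g = (\<lambda>t::complex. sin (of_real pi * t) / of_real pi)"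
  have ev: "eventually (\<lambda>t. integrand a (a - 1) n u t = hh a n u t / g t) (at z)"
    using near_neg_int[of k] unfolding z_def[symmetric]
  proof (rule eventually_mono)
    fix t assume t: "Re t < 0 \<and> sin (of_real pi * t) \<noteq> 0"
    have q0: "g t \<noteq> 0" using t by (simp add: g_def)
    have ae: "a - 1 + 1 = Suc (a - 1)" by simp
    have "integrand a (a - 1) n u t = hh a n u t * g t ^ (a - 1) / g t ^ (a - 1 + 1)"
      using integrand_eq_hh[of t a "a - 1" n u] t by (simp add: g_def)
    also have "\<dots> = hh a n u t / g t * (g t ^ (a - 1) / g t ^ (a - 1))"
      by (simp only: ae power_Suc divide_inverse inverse_mult_distrib mult_ac)
    also have "\<dots> = hh a n u t / g t" using q0 by simp
    finally show "integrand a (a - 1) n u t = hh a n u t / g t" .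
  qed
  have "residue (integrand a (a - 1) n u) z = residue (\<lambda>t. hh a n u t / g t) z"
    by (rule residue_cong[OF ev refl])
  also have "\<dots> = hh a n u z / cos (of_real pi * z)"
  proof (rule residue_simple_pole_deriv[where s = "{t. Re t < 0}"])
    show "hh a n u holomorphic_on {t. Re t < 0}" by (rule hh_holo)
    show "g holomorphic_on {t. Re t < 0}" unfolding g_def by (intro holomorphic_intros) auto
    show "open {t::complex. Re t < 0}" by (intro open_Collect_less continuous_intros)
    show "connected {t::complex. Re t < 0}" by (intro convex_connected convex_halfspace_Re_lt)
    show "z \<in> {t. Re t < 0}" by (simp add: z_def)
    show "(g has_field_derivative cos (of_real pi * z)) (at z)"
      unfolding g_def by (auto intro!: derivative_eq_intros)
    show "hh a n u z \<noteq> 0"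
    proof -
      have G: "Gamma (- z) \<noteq> 0" by (simp add: z_def Gamma_eq_zero_iff Re_pos_not_nonpos_Ints)
      have R: "rGamma (of_nat n - z + 1) \<noteq> 0"
        by (simp add: z_def rGamma_eq_zero_iff Re_pos_not_nonpos_Ints)
      show ?thesis using G R by (simp add: hh_def)
    qed
    show "g z = 0" by (simp add: g_def sin_pi_eq_0_iff z_def)
    have "cos (of_real pi * z) = (-1) ^ Suc k"
    proof -
      have "of_real pi * z = - (of_nat (Suc k) * of_real pi)" by (simp add: z_def algebra_simps)
      thus ?thesis by (simp only: cos_minus cos_npi_complex')
    qed
    thus "cos (of_real pi * z) \<noteq> 0" by simp
  qed
  finally have res: "residue (integrand a (a - 1) n u) z = hh a n u z / cos (of_real pi * z)" .
  have c1: "norm (cos (of_real pi * z)) = 1"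
  proof -
    have "of_real pi * z = - (of_nat (Suc k) * of_real pi)" by (simp add: z_def algebra_simps)
    hence "cos (of_real pi * z) = (-1) ^ Suc k" by (simp only: cos_minus cos_npi_complex')
    thus ?thesis by (simp add: norm_power)
  qed
  have g1: "Gamma (- z) = fact k"
  proof -
    have "- z = 1 + of_nat k" by (simp add: z_def)
    thus ?thesis by (simp add: Gamma_fact)
  qed
  have g2: "rGamma (of_nat n - z + 1) = inverse (fact (n + Suc k))"
  proof -
    have "of_nat n - z + 1 = 1 + of_nat (n + Suc k)" by (simp add: z_def)
    hence "rGamma (of_nat n - z + 1) = inverse (Gamma (1 + of_nat (n + Suc k)))"
      by (simp only: rGamma_inverse_Gamma)
    thus ?thesis by (simp only: Gamma_fact)
  qed
  have e1: "norm (exp (\<i> * of_real pi * z * of_real u)) = 1" by (simp add: z_def)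
  have "norm (hh a n u z) = norm (fact n :: complex) ^ a * norm (-1::complex) ^ (a - 1)
      * norm (fact k :: complex) ^ (a - 1) * inverse (norm (fact (n + Suc k) :: complex)) ^ a
      * norm (exp (\<i> * of_real pi * z * of_real u))"
    unfolding hh_def g1 g2 by (simp only: norm_mult norm_power norm_inverse)
  also have "\<dots> = fact n ^ a * fact k ^ (a - 1) / fact (n + Suc k) ^ a"
    by (simp only: norm_fact e1 norm_minus_cancel norm_one power_one mult_1_right divide_inverse power_inverse)
  finally have "norm (hh a n u z) = fact n ^ a * fact k ^ (a - 1) / fact (n + Suc k) ^ a" .
  thus ?thesis using res c1 by (simp add: z_def norm_divide)
qed

lemma fact_bound_aux:
  fixes n k :: nat assumes "1 \<le> n"
  shows "fact n * fact k / fact (n + Suc k) \<le> (1 / real n :: real)"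
proof -
  have d: "fact (Suc n) * fact k dvd (fact (Suc n + k) :: nat)" by (rule fact_fact_dvd_fact)
  have "fact (Suc n) * fact k \<le> (fact (Suc n + k) :: nat)"
    by (rule dvd_imp_le[OF d]) simp
  moreover have "Suc n + k = n + Suc k" by simp
  ultimately have 1: "real (fact (Suc n) * fact k) \<le> real (fact (n + Suc k))" by (simp only: of_nat_le_iff)
  have "real n * (fact n * fact k) \<le> real (Suc n) * fact n * fact k" by (simp add: mult_right_mono)
  also have "\<dots> = real (fact (Suc n) * fact k)" by (simp add: of_nat_mult algebra_simps)
  also have "\<dots> \<le> fact (n + Suc k)" using 1 by (simp only: of_nat_fact)
  finally have 2: "real n * (fact n * fact k) \<le> fact (n + Suc k)" .
  have pos: "0 < (fact (n + Suc k) :: real)" "0 < real n" using assms by auto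
  show ?thesis using 2 pos by (simp add: divide_le_eq field_simps)
qed

lemma residue_neg_bound:
  assumes a: "1 \<le> a" and n: "1 \<le> n"
  shows "norm (residue (integrand a (a - 1) n u) (- of_nat (Suc k))) \<le> (1 / real n) ^ a / fact k"
proof -
  define q :: real where "q = fact n * fact k / fact (n + Suc k)"
  have q0: "0 \<le> q" by (simp add: q_def)
  have "fact n ^ a * fact k ^ (a - 1) / fact (n + Suc k) ^ a = q ^ a / fact k"
  proof -
    have "fact k ^ (a - 1) = (fact k ^ a / fact k :: real)"
      using a by (metis (no_types) Suc_diff_1 fact_gt_zero less_le_trans nonzero_mult_div_cancel_left
          power_Suc zero_less_one order.refl less_numeral_extra(3) not_one_le_zero)
    thus ?thesis by (simp add: q_def power_divide power_mult_distrib)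
  qed
  also have "\<dots> \<le> (1 / real n) ^ a / fact k"
  proof -
    have "q \<le> 1 / real n" unfolding q_def by (rule fact_bound_aux[OF n])
    thus ?thesis by (intro divide_right_mono power_mono q0) simp_all
  qed
  finally show ?thesis using residue_neg_simple[OF a, of n u k] by linarith
qed



lemma seg_Re_Im:
  fixes x y t :: complex
  assumes "t \<in> closed_segment x y"
  shows "min (Re x) (Re y) \<le> Re t \<and> Re t \<le> max (Re x) (Re y)
       \<and> min (Im x) (Im y) \<le> Im t \<and> Im t \<le> max (Im x) (Im y)"
proof -
  obtain v where v: "0 \<le> v" "v \<le> 1" "t = (1 - v) *\<^sub>R x + v *\<^sub>R y"
    using assms by (auto simp: in_segment)
  have R: "Re t = Re x + v * (Re y - Re x)" "Im t = Im x + v * (Im y - Im x)"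
    unfolding v(3) by (simp_all add: algebra_simps)
  have b: "\<And>p q::real. min p q \<le> p + v * (q - p) \<and> p + v * (q - p) \<le> max p q"
  proof -
    fix p q :: real
    show "min p q \<le> p + v * (q - p) \<and> p + v * (q - p) \<le> max p q"
    proof (cases "p \<le> q")
      case True
      have w1: "0 \<le> v * (q - p)" using True v(1) by simp
      have w2: "v * (q - p) \<le> 1 * (q - p)" using True v(2) by (intro mult_right_mono) auto
      have g: "\<And>w. 0 \<le> w \<Longrightarrow> w \<le> 1 * (q - p) \<Longrightarrow> min p q \<le> p + w \<and> p + w \<le> max p q"
        using True by auto
      show ?thesis by (rule g[OF w1 w2])
    next
      case False
      have w1: "v * (q - p) \<le> 0" using False v(1) by (simp add: mult_nonneg_nonpos)
      have w2: "1 * (q - p) \<le> v * (q - p)" by (rule mult_right_mono_neg[OF v(2)]) (use False in simp)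
      have g: "\<And>w. w \<le> 0 \<Longrightarrow> 1 * (q - p) \<le> w \<Longrightarrow> min p q \<le> p + w \<and> p + w \<le> max p q"
        using False by auto
      show ?thesis by (rule g[OF w1 w2])
    qed
  qed
  show ?thesis unfolding R using b by blast
qed

lemma half_not_Int: "real_of_int j + 1/2 \<notin> \<int>"
proof
  assume "real_of_int j + 1/2 \<in> \<int>"
  then obtain i where "real_of_int j + 1/2 = real_of_int i" by (auto elim: Ints_cases)
  hence ij: "real_of_int (i - j) = 1/2" by simp
  have "i - j \<le> 0 \<or> i - j \<ge> 1" by linarith
  thus False
  proof
    assume "i - j \<le> 0" hence "real_of_int (i - j) \<le> 0" by (simp only: of_int_le_0_iff)
    thus False using ij by linarith
  next
    assume "i - j \<ge> 1" hence "real_of_int 1 \<le> real_of_int (i - j)" by (simp only: of_int_le_iff)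
    thus False using ij by linarith
  qed
qed

lemma sin_ne_if: "Re t \<notin> \<int> \<or> Im t \<noteq> 0 \<Longrightarrow> sin (of_real pi * t) \<noteq> 0"
  using Ints_complex_Im[of t] by (auto simp: sin_pi_eq_0_iff)

lemma norm_sin_ge1:
  fixes t :: complex
  assumes "(\<exists>j::int. Re t = of_int j + 1/2) \<or> \<bar>Im t\<bar> = 1"
  shows "1 \<le> norm (sin (of_real pi * t))"
proof -
  define x where "x = pi * Re t"
  define y where "y = pi * Im t"
  define C where "C = (exp y + exp (- y)) / 2"
  define S where "S = (exp y - exp (- y)) / 2"
  have ReS: "Re (sin (of_real pi * t)) = sin x * C" by (simp add: Re_sin x_def y_def C_def)
  have ImS: "Im (sin (of_real pi * t)) = cos x * S" by (simp add: Im_sin x_def y_def S_def)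
  have C1: "1 \<le> C"
  proof -
    have "1 + y \<le> exp y" "1 + (-y) \<le> exp (-y)" by (rule exp_ge_add_one_self)+
    hence "2 \<le> exp y + exp (-y)" by linarith
    thus ?thesis unfolding C_def by simp
  qed
  have C2: "1 \<le> C ^ 2" using C1 by (simp add: one_le_power)
  have sq: "(sin x)^2 + (cos x)^2 = 1" by simp
  have main: "1 \<le> (sin x * C)^2 + (cos x * S)^2"
    using assms
  proof
    assume "\<exists>j::int. Re t = of_int j + 1/2"
    then obtain j :: int where j: "Re t = of_int j + 1/2" by blast
    have "x = pi * of_int j + pi / 2" by (simp add: x_def j algebra_simps)
    hence "sin x = cos (pi * of_int j)" by (simp add: sin_add)
    hence "(sin x)^2 = 1" by simp
    hence "1 \<le> (sin x * C)^2" using C2 by (simp add: power_mult_distrib)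
    moreover have "0 \<le> (cos x * S)^2" by simp
    ultimately show ?thesis by linarith
  next
    assume "\<bar>Im t\<bar> = 1"
    hence "\<bar>y\<bar> = pi" by (simp add: y_def abs_mult)
    have "1 \<le> S ^ 2"
    proof -
      have e1: "exp pi \<ge> 4" using exp_ge_add_one_self[of pi] pi_gt3 by linarith
      have e2: "exp (- pi) \<le> 1" by simp
      have e3: "2 \<le> exp pi - exp (-pi)" using e1 e2 by linarith
      have "1 \<le> \<bar>S\<bar>"
      proof (cases "y \<ge> 0")
        case True
        hence "y = pi" using \<open>\<bar>y\<bar> = pi\<close> by simp
        thus ?thesis using e3 by (simp add: S_def)
      next
        case False
        hence "y = - pi" using \<open>\<bar>y\<bar> = pi\<close> by simp
        thus ?thesis using e3 by (simp add: S_def)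
      qed
      hence "1 ^ 2 \<le> \<bar>S\<bar> ^ 2" by (intro power_mono) auto
      thus ?thesis by simp
    qed
    have "(sin x)^2 * 1 \<le> (sin x)^2 * C^2" using C2 by (intro mult_left_mono) auto
    moreover have "(cos x)^2 * 1 \<le> (cos x)^2 * S^2" using \<open>1 \<le> S^2\<close> by (intro mult_left_mono) auto
    moreover have "(sin x * C)^2 + (cos x * S)^2 = (sin x)^2 * C^2 + (cos x)^2 * S^2"
      by (simp add: power_mult_distrib)
    ultimately show ?thesis using sq by linarith
  qed
  have "1 \<le> (norm (sin (of_real pi * t)))^2" using main by (simp add: cmod_power2 ReS ImS)
  show ?thesis
  proof (rule ccontr)
    define w where "w = norm (sin (of_real pi * t))"
    assume "\<not> 1 \<le> norm (sin (of_real pi * t))"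
    hence w1: "w < 1" "0 \<le> w" by (simp_all add: w_def)
    have "w * w \<le> w * 1" using w1 by (intro mult_left_mono) auto
    hence "w ^ 2 < 1" using w1 by (simp add: power2_eq_square)
    thus False using \<open>1 \<le> (norm (sin (of_real pi * t)))^2\<close> by (simp add: w_def)
  qed
qed



lemma cont_seg:
  assumes "\<And>t. t \<in> closed_segment x y \<Longrightarrow> sin (of_real pi * t) \<noteq> 0"
  shows "continuous_on (closed_segment x y) (integrand a mu n u)"
  by (rule continuous_on_subset[OF holomorphic_on_imp_continuous_on[OF integrand_holo]]) (use assms in auto)

lemma cint_seg:
  assumes "\<And>t. t \<in> closed_segment x y \<Longrightarrow> sin (of_real pi * t) \<noteq> 0"
  shows "integrand a mu n u contour_integrable_on linepath x y"
  by (rule contour_integrable_continuous_linepath[OF cont_seg[OF assms]])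

lemma horiz_seg:
  assumes "Im x = c" "Im y = c" "t \<in> closed_segment x y"
  shows "Im t = c \<and> min (Re x) (Re y) \<le> Re t \<and> Re t \<le> max (Re x) (Re y)"
  using seg_Re_Im[OF assms(3)] assms(1,2) by auto

lemma vert_seg:
  assumes "Re x = c" "Re y = c" "t \<in> closed_segment x y"
  shows "Re t = c \<and> min (Im x) (Im y) \<le> Im t \<and> Im t \<le> max (Im x) (Im y)"
  using seg_Re_Im[OF assms(3)] assms(1,2) by auto

lemma horiz_ok:
  assumes "Im x = c" "Im y = c" "c \<noteq> 0"
  shows "\<And>t. t \<in> closed_segment x y \<Longrightarrow> sin (of_real pi * t) \<noteq> 0"
  using horiz_seg[OF assms(1,2)] assms(3) by (intro sin_ne_if) auto

lemma vert_ok: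
  assumes "Re x = of_int j + 1/2" "Re y = of_int j + 1/2"
  shows "\<And>t. t \<in> closed_segment x y \<Longrightarrow> sin (of_real pi * t) \<noteq> 0"
  using vert_seg[OF assms(1,2)] half_not_Int[of j] by (intro sin_ne_if) auto

lemma half_nat: "real n + 1/2 = real_of_int (int n) + 1/2" by simp
lemma half_neg: "- (real m + 1/2) = real_of_int (- int m - 1) + 1/2" by simp

lemma loop_decomp:
  "contour_integral (loop_trunc n R) (integrand a mu n u) =
     contour_integral (linepath (Complex (-R) (-1)) (Complex (real n + 1/2) (-1))) (integrand a mu n u)
   + contour_integral (linepath (Complex (real n + 1/2) (-1)) (Complex (real n + 1/2) 1)) (integrand a mu n u)
   + contour_integral (linepath (Complex (real n + 1/2) 1) (Complex (-R) 1)) (integrand a mu n u)"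
proof -
  let ?f = "integrand a mu n u"
  have i1: "?f contour_integrable_on linepath (Complex (-R) (-1)) (Complex (real n + 1/2) (-1))"
    by (rule cint_seg[OF horiz_ok[of _ "-1"]]) auto
  have i2: "?f contour_integrable_on linepath (Complex (real n + 1/2) (-1)) (Complex (real n + 1/2) 1)"
    by (rule cint_seg[OF vert_ok[of _ "int n"]]) auto
  have i3: "?f contour_integrable_on linepath (Complex (real n + 1/2) 1) (Complex (-R) 1)"
    by (rule cint_seg[OF horiz_ok[of _ "1"]]) auto
  have i23: "?f contour_integrable_on (linepath (Complex (real n + 1/2) (-1)) (Complex (real n + 1/2) 1)
                +++ linepath (Complex (real n + 1/2) 1) (Complex (-R) 1))"
    by (intro contour_integrable_joinI i2 i3 valid_path_linepath)
  show ?thesis unfolding loop_trunc_def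
    using i1 i2 i3 i23 by (simp add: add.assoc)
qed

lemma diffG:
  assumes "0 \<le> R'" "R' \<le> R"
  shows "contour_integral (loop_trunc n R) (integrand a mu n u) =
           contour_integral (loop_trunc n R') (integrand a mu n u)
         + contour_integral (linepath (Complex (-R) (-1)) (Complex (-R') (-1))) (integrand a mu n u)
         + contour_integral (linepath (Complex (-R') 1) (Complex (-R) 1)) (integrand a mu n u)"
proof -
  let ?f = "integrand a mu n u"
  define P1 where "P1 = Complex (real n + 1/2) (-1)"
  define P2 where "P2 = Complex (real n + 1/2) 1"
  have s1: "contour_integral (linepath (Complex (-R) (-1)) P1) ?f =
              contour_integral (linepath (Complex (-R) (-1)) (Complex (-R') (-1))) ?f
            + contour_integral (linepath (Complex (-R') (-1)) P1) ?f"
  proof (rule contour_integral_split)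
    show "continuous_on (closed_segment (Complex (- R) (- 1)) P1) ?f"
      by (rule cont_seg[OF horiz_ok[of _ "-1"]]) (auto simp: P1_def)
    show "0 \<le> (R - R') / (R + real n + 1/2)" using assms by simp
    show "(R - R') / (R + real n + 1/2) \<le> 1" using assms by (simp add: divide_le_eq)
    have D: "R + real n + 1/2 \<noteq> 0" using assms by simp
    have "(R - R') / (R + real n + 1/2) * (real n + 1/2 + R) = R - R'"
      using D by (simp add: add_ac)
    thus "Complex (- R') (- 1) - Complex (- R) (- 1) =
            ((R - R') / (R + real n + 1/2)) *\<^sub>R (P1 - Complex (- R) (- 1))"
      by (simp add: P1_def complex_eq_iff)
  qed
  have s3: "contour_integral (linepath P2 (Complex (-R) 1)) ?f =
              contour_integral (linepath P2 (Complex (-R') 1)) ?f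
            + contour_integral (linepath (Complex (-R') 1) (Complex (-R) 1)) ?f"
  proof (rule contour_integral_split)
    show "continuous_on (closed_segment P2 (Complex (- R) 1)) ?f"
      by (rule cont_seg[OF horiz_ok[of _ "1"]]) (auto simp: P2_def)
    show "0 \<le> (R' + real n + 1/2) / (R + real n + 1/2)" using assms by simp
    show "(R' + real n + 1/2) / (R + real n + 1/2) \<le> 1" using assms by (simp add: divide_le_eq)
    have D: "R + real n + 1/2 \<noteq> 0" using assms by simp
    have "(R' + real n + 1/2) / (R + real n + 1/2) * (- R - (real n + 1/2)) = - R' - (real n + 1/2)"
    proof -
      have "- R - (real n + 1/2) = - (R + real n + 1/2)" by simp
      hence "(R' + real n + 1/2) / (R + real n + 1/2) * (- R - (real n + 1/2))
             = - ((R' + real n + 1/2) / (R + real n + 1/2) * (R + real n + 1/2))" by (simp only: mult_minus_right)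
      also have "\<dots> = - (R' + real n + 1/2)" using D by simp
      finally show ?thesis by simp
    qed
    thus "Complex (- R') 1 - P2 = ((R' + real n + 1/2) / (R + real n + 1/2)) *\<^sub>R (Complex (- R) 1 - P2)"
      unfolding complex_eq_iff P2_def minus_complex.sel scaleR_complex.sel complex.sel
      by (intro conjI) (linarith, simp)
  qed
  show ?thesis
    using loop_decomp[of n R a mu u] loop_decomp[of n R' a mu u] s1 s3
    unfolding P1_def P2_def by simp
qed

lemma f_small:
  assumes a: "1 \<le> a" and e: "0 < e"
  shows "\<exists>X\<ge>1. \<forall>t. Re t \<le> - X \<longrightarrow> \<bar>Im t\<bar> \<le> 1 \<longrightarrow> 1 \<le> norm (sin (of_real pi * t))
            \<longrightarrow> norm (integrand a mu n u t) \<le> e"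
proof -
  define K where "K = fact n ^ a * exp pi ^ (a - 1) * pi ^ (mu + 1) * exp (pi * \<bar>u\<bar>)"
  have K: "0 < K" unfolding K_def by (intro mult_pos_pos) auto
  obtain X0 where X0: "\<And>z::complex. X0 \<le> Re z \<Longrightarrow> \<bar>Im z\<bar> \<le> 1 \<Longrightarrow> norm (rGamma z) \<le> e / K"
    using rGamma_decay[of "e / K"] K e by auto
  show ?thesis
  proof (intro exI[of _ "max 1 X0"] conjI allI impI)
    fix t :: complex
    assume t: "Re t \<le> - max 1 X0" "\<bar>Im t\<bar> \<le> 1" "1 \<le> norm (sin (of_real pi * t))"
    have "Re t \<le> -1" using t by simp
    have "norm (integrand a mu n u t) \<le> K * norm (rGamma (- t))"
      using integrand_bound[OF a \<open>Re t \<le> -1\<close> t(2,3), of mu n u] by (simp add: K_def)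
    also have "\<dots> \<le> K * (e / K)"
      using t by (intro mult_left_mono X0) (use K in auto)
    also have "\<dots> = e" using K by simp
    finally show "norm (integrand a mu n u t) \<le> e" .
  qed simp
qed



lemma rect_res:
  fixes m :: nat
  defines "R \<equiv> real m + 1/2"
  shows "contour_integral (loop_trunc n R) (integrand a mu n u)
         + contour_integral (linepath (Complex (-R) 1) (Complex (-R) (-1))) (integrand a mu n u)
       = 2 * pi * \<i> * ((\<Sum>k=0..n. residue (integrand a mu n u) (of_nat k))
                       + (\<Sum>k<m. residue (integrand a mu n u) (- of_nat (Suc k))))"
proof -
  let ?f = "integrand a mu n u"
  define A where "A = Complex (-R) (-1)"
  define B where "B = Complex (real n + 1/2) 1"
  define S where "S = box (Complex (-R - 1/4) (-2)) (Complex (real n + 3/4) 2)"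
  define P where "P = (of_nat ` {0..n} :: complex set)"
  define Q where "Q = ((\<lambda>k. - of_nat (Suc k)) ` {..<m} :: complex set)"
  have R0: "R > 0" by (simp add: R_def)
  have ReA: "Re A = - R" "Im A = -1" "Re B = real n + 1/2" "Im B = 1" by (simp_all add: A_def B_def)
  have AB: "Re A \<le> Re B" "Im A \<le> Im B" using R0 by (simp_all add: ReA)
  have cbS: "cbox A B \<subseteq> S"
    by (auto simp: S_def in_cbox_complex_iff in_box_complex_iff ReA)
  have PQbox: "p \<in> box A B" if "p \<in> P \<union> Q" for p
    using that by (auto simp: P_def Q_def in_box_complex_iff ReA R_def)
  have Ints_in: "t \<in> P \<union> Q" if tS: "t \<in> S" "t \<in> \<int>" for t
  proof -
    obtain j :: int where j: "t = of_int j" using tS(2) by (auto elim: Ints_cases)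
    have "- R - 1/4 < real_of_int j" "real_of_int j < real n + 3/4"
      using tS(1) j by (auto simp: S_def in_box_complex_iff)
    hence j1: "- int m \<le> j" "j \<le> int n" unfolding R_def by linarith+
    show ?thesis
    proof (cases "0 \<le> j")
      case True
      hence "t = of_nat (nat j)" "nat j \<in> {0..n}" using j j1 by auto
      thus ?thesis unfolding P_def by blast
    next
      case False
      define k where "k = nat (- j) - 1"
      have "k < m" "j = - int (Suc k)" using False j1 unfolding k_def by linarith+
      hence "t = - of_nat (Suc k)" "k \<in> {..<m}" using j by auto
      thus ?thesis unfolding Q_def by blast
    qed
  qed
  have hol: "?f holomorphic_on S - (P \<union> Q)"
    by (rule holomorphic_on_subset[OF integrand_holo]) (use Ints_in sin_pi_eq_0_iff in auto)
  have img: "path_image (rectpath A B) \<subseteq> S - (P \<union> Q)"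
  proof -
    have "path_image (rectpath A B) = cbox A B - box A B"
      by (rule path_image_rectpath_cbox_minus_box[OF AB])
    thus ?thesis using cbS PQbox by auto
  qed
  have fin: "finite (P \<union> Q)" by (simp add: P_def Q_def)
  have "contour_integral (rectpath A B) ?f =
          2 * pi * \<i> * (\<Sum>p\<in>P \<union> Q. winding_number (rectpath A B) p * residue ?f p)"
  proof (rule Residue_theorem[OF _ _ fin hol])
    show "open S" unfolding S_def by (rule open_box)
    show "connected S" by (simp add: S_def convex_connected)
    show "valid_path (rectpath A B)" by simp
    show "pathfinish (rectpath A B) = pathstart (rectpath A B)" by simp
    show "path_image (rectpath A B) \<subseteq> S - (P \<union> Q)" by (rule img)
    show "\<forall>z. z \<notin> S \<longrightarrow> winding_number (rectpath A B) z = 0"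
      using cbS by (auto intro!: winding_number_rectpath_outside AB)
  qed
  also have "(\<Sum>p\<in>P \<union> Q. winding_number (rectpath A B) p * residue ?f p) = (\<Sum>p\<in>P \<union> Q. residue ?f p)"
    by (intro sum.cong refl) (simp add: winding_number_rectpath PQbox)
  also have "\<dots> = (\<Sum>p\<in>P. residue ?f p) + (\<Sum>p\<in>Q. residue ?f p)"
  proof (rule sum.union_disjoint)
    show "P \<inter> Q = {}"
    proof (rule ccontr)
      assume "P \<inter> Q \<noteq> {}"
      then obtain x y :: nat where "(of_nat x :: complex) = - of_nat (Suc y)" by (auto simp: P_def Q_def)
      hence "Re (of_nat x :: complex) = Re (- of_nat (Suc y))" by simp
      hence "real x = - real (Suc y)" by simp
      thus False by linarith
    qed
  qed (auto simp: P_def Q_def)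
  also have "(\<Sum>p\<in>P. residue ?f p) = (\<Sum>k=0..n. residue ?f (of_nat k))"
    unfolding P_def by (subst sum.reindex) (auto simp: inj_on_def)
  also have "(\<Sum>p\<in>Q. residue ?f p) = (\<Sum>k<m. residue ?f (- of_nat (Suc k)))"
    unfolding Q_def by (subst sum.reindex) (auto simp: inj_on_def)
  finally have res: "contour_integral (rectpath A B) ?f = 2 * pi * \<i> * ((\<Sum>k=0..n. residue ?f (of_nat k))
                       + (\<Sum>k<m. residue ?f (- of_nat (Suc k))))" .
  have i1: "?f contour_integrable_on linepath A (Complex (real n + 1/2) (-1))"
    by (rule cint_seg[OF horiz_ok[of _ "-1"]]) (auto simp: A_def)
  have i2: "?f contour_integrable_on linepath (Complex (real n + 1/2) (-1)) B"
    by (rule cint_seg[OF vert_ok[of _ "int n"]]) (auto simp: B_def)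
  have i3: "?f contour_integrable_on linepath B (Complex (-R) 1)"
    by (rule cint_seg[OF horiz_ok[of _ "1"]]) (auto simp: B_def)
  have i4: "?f contour_integrable_on linepath (Complex (-R) 1) A"
    by (rule cint_seg[OF vert_ok[of _ "- int m - 1"]]) (auto simp: A_def R_def)
  have rp: "rectpath A B = linepath A (Complex (real n + 1/2) (-1)) +++ linepath (Complex (real n + 1/2) (-1)) B
              +++ linepath B (Complex (-R) 1) +++ linepath (Complex (-R) 1) A"
    by (simp add: rectpath_def Let_def ReA)
  have "contour_integral (rectpath A B) ?f =
          contour_integral (linepath A (Complex (real n + 1/2) (-1))) ?f
        + contour_integral (linepath (Complex (real n + 1/2) (-1)) B) ?f
        + contour_integral (linepath B (Complex (-R) 1)) ?f
        + contour_integral (linepath (Complex (-R) 1) A) ?f"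
    unfolding rp using i1 i2 i3 i4
    by (simp add: contour_integrable_joinI add.assoc)
  also have "\<dots> = contour_integral (loop_trunc n R) ?f + contour_integral (linepath (Complex (-R) 1) A) ?f"
    using loop_decomp[of n R a mu u] by (simp add: A_def B_def)
  finally show ?thesis using res by (simp add: A_def)
qed



lemma seg_int_bound:
  assumes "\<And>t. t \<in> closed_segment x y \<Longrightarrow> sin (of_real pi * t) \<noteq> 0"
      and "\<And>t. t \<in> closed_segment x y \<Longrightarrow> norm (integrand a mu n u t) \<le> B" and "0 \<le> B"
  shows "norm (contour_integral (linepath x y) (integrand a mu n u)) \<le> B * norm (y - x)"
  by (rule has_contour_integral_bound_linepath[OF has_contour_integral_integral[OF cint_seg[OF assms(1)]]])
     (use assms in auto)

lemma main_lim:
  assumes a: "1 \<le> a"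
      and summ: "summable (\<lambda>k. residue (integrand a mu n u) (- of_nat (Suc k)))"
  shows "I_loop a mu n u = I_tilde a mu n u + (\<Sum>k. residue (integrand a mu n u) (- of_nat (Suc k)))"
proof -
  let ?f = "integrand a mu n u"
  define r where "r = (\<lambda>k. residue ?f (- of_nat (Suc k)))"
  define L where "L = I_tilde a mu n u + suminf r"
  define c :: complex where "c = 2 * of_real pi * \<i>"
  define G where "G = (\<lambda>R. contour_integral (loop_trunc n R) ?f)"
  have c0: "norm c = 2 * pi" by (simp add: c_def norm_mult)
  have lim: "((\<lambda>R. G R / c) \<longlongrightarrow> L) at_top"
  proof (rule tendstoI)
    fix e :: real assume e: "0 < e"
    define e' where "e' = e / 2"
    have e': "0 < e'" using e by (simp add: e'_def)
    obtain X where X: "X \<ge> 1" "\<And>t. Re t \<le> - X \<Longrightarrow> \<bar>Im t\<bar> \<le> 1 \<Longrightarrow> 1 \<le> norm (sin (of_real pi * t))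
            \<Longrightarrow> norm (?f t) \<le> e'"
      using f_small[OF a e', of mu n u] by blast
    have "(\<lambda>m. \<Sum>k<m. r k) \<longlonglongrightarrow> suminf r" using summ unfolding r_def by (rule summable_LIMSEQ)
    hence "eventually (\<lambda>m. dist (\<Sum>k<m. r k) (suminf r) < e') sequentially"
      using e' by (rule tendstoD)
    then obtain N where N: "\<And>m. m \<ge> N \<Longrightarrow> dist (\<Sum>k<m. r k) (suminf r) < e'"
      unfolding eventually_sequentially by blast
    show "eventually (\<lambda>R. dist (G R / c) L < e) at_top"
      unfolding eventually_at_top_linorder
    proof (intro exI[of _ "X + real N + 2"] allI impI)
      fix R :: real assume R: "X + real N + 2 \<le> R"
      define m where "m = nat \<lfloor>R - 1/2\<rfloor>"
      define R' where "R' = real m + 1/2"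
      have fl: "real_of_int \<lfloor>R - 1/2\<rfloor> \<le> R - 1/2" "R - 1/2 < real_of_int \<lfloor>R - 1/2\<rfloor> + 1"
        by linarith+
      have fl0: "0 \<le> \<lfloor>R - 1/2\<rfloor>" using R X(1) by linarith
      have mr: "real m = real_of_int \<lfloor>R - 1/2\<rfloor>" unfolding m_def using fl0 by simp
      have RR: "0 \<le> R'" "R' \<le> R" "R - R' < 1" "X \<le> R'" using fl mr R X(1) of_nat_0_le_iff[of m] unfolding R'_def by linarith+
      have mN: "N \<le> m"
      proof -
        have "real N < real m + 1" using fl mr R X(1) by linarith
        thus ?thesis by linarith
      qed
      define s1 where "s1 = contour_integral (linepath (Complex (-R) (-1)) (Complex (-R') (-1))) ?f"
      define s3 where "s3 = contour_integral (linepath (Complex (-R') 1) (Complex (-R) 1)) ?f"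
      define V where "V = contour_integral (linepath (Complex (-R') 1) (Complex (-R') (-1))) ?f"
      have GR: "G R = G R' + s1 + s3" unfolding G_def s1_def s3_def by (rule diffG[OF RR(1,2)])
      have rect: "G R' + V = c * (I_tilde a mu n u + (\<Sum>k<m. r k))"
        unfolding G_def V_def R'_def c_def r_def I_tilde_def using rect_res[of n m a mu u] by simp
      have b1: "norm s1 \<le> e' * 1"
      proof -
        have "norm s1 \<le> e' * norm (Complex (-R') (-1) - Complex (-R) (-1))"
          unfolding s1_def
        proof (rule seg_int_bound)
          fix t assume t: "t \<in> closed_segment (Complex (- R) (- 1)) (Complex (- R') (- 1))"
          have h: "Im t = -1 \<and> min (-R) (-R') \<le> Re t \<and> Re t \<le> max (-R) (-R')"
            using horiz_seg[OF _ _ t, of "-1"] by simp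
          show "sin (of_real pi * t) \<noteq> 0" using h by (intro sin_ne_if) auto
          show "norm (?f t) \<le> e'" using h RR by (intro X(2) norm_sin_ge1) auto
        qed (use e' in auto)
        also have "norm (Complex (-R') (-1) - Complex (-R) (-1)) = R - R'"
          using RR by (simp add: norm_complex_def)
        finally have "norm s1 \<le> e' * (R - R')" .
        moreover have "e' * (R - R') \<le> e' * 1" using RR e' by (intro mult_left_mono) auto
        ultimately show ?thesis by linarith
      qed
      have b3: "norm s3 \<le> e' * 1"
      proof -
        have "norm s3 \<le> e' * norm (Complex (-R) 1 - Complex (-R') 1)"
          unfolding s3_def
        proof (rule seg_int_bound)
          fix t assume t: "t \<in> closed_segment (Complex (- R') 1) (Complex (- R) 1)"
          have h: "Im t = 1 \<and> min (-R') (-R) \<le> Re t \<and> Re t \<le> max (-R') (-R)"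
            using horiz_seg[OF _ _ t, of "1"] by simp
          show "sin (of_real pi * t) \<noteq> 0" using h by (intro sin_ne_if) auto
          show "norm (?f t) \<le> e'" using h RR by (intro X(2) norm_sin_ge1) auto
        qed (use e' in auto)
        also have "norm (Complex (-R) 1 - Complex (-R') 1) = R - R'"
          using RR by (simp add: norm_complex_def)
        finally have "norm s3 \<le> e' * (R - R')" .
        moreover have "e' * (R - R') \<le> e' * 1" using RR e' by (intro mult_left_mono) auto
        ultimately show ?thesis by linarith
      qed
      have bV: "norm V \<le> e' * 2"
      proof -
        have "norm V \<le> e' * norm (Complex (-R') (-1) - Complex (-R') 1)"
          unfolding V_def
        proof (rule seg_int_bound)
          fix t assume t: "t \<in> closed_segment (Complex (- R') 1) (Complex (- R') (- 1))"
          have h: "Re t = -R' \<and> min 1 (-1) \<le> Im t \<and> Im t \<le> max 1 (-1)"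
            using vert_seg[OF _ _ t, of "-R'"] by simp
          have hj: "Re t = real_of_int (- int m - 1) + 1/2" using h by (simp add: R'_def)
          show "sin (of_real pi * t) \<noteq> 0" using hj half_not_Int by (intro sin_ne_if) metis
          have "1 \<le> norm (sin (of_real pi * t))" using hj by (intro norm_sin_ge1) blast
          thus "norm (?f t) \<le> e'" using h RR by (intro X(2)) auto
        qed (use e' in auto)
        also have "norm (Complex (-R') (-1) - Complex (-R') 1) = 2"
          by (simp add: norm_complex_def)
        finally show ?thesis .
      qed
      have sumb: "norm ((\<Sum>k<m. r k) - suminf r) < e'" using N[OF mN] by (simp add: dist_norm)
      have "G R - c * L = s1 + s3 - V + c * ((\<Sum>k<m. r k) - suminf r)"
        using GR rect unfolding L_def by (simp add: algebra_simps)
      hence "norm (G R - c * L) \<le> norm s1 + norm s3 + norm V + norm c * norm ((\<Sum>k<m. r k) - suminf r)"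
      proof -
        have "norm (s1 + s3 - V + c * ((\<Sum>k<m. r k) - suminf r)) \<le> norm (s1 + s3 - V) + norm (c * ((\<Sum>k<m. r k) - suminf r))"
          by (rule norm_triangle_ineq)
        moreover have "norm (s1 + s3 - V) \<le> norm (s1 + s3) + norm V" by (rule norm_triangle_ineq4)
        moreover have "norm (s1 + s3) \<le> norm s1 + norm s3" by (rule norm_triangle_ineq)
        ultimately show ?thesis using \<open>G R - c * L = _\<close> by (simp add: norm_mult)
      qed
      also have "\<dots> \<le> e' + e' + 2 * e' + 2 * pi * e'"
        using b1 b3 bV sumb c0 by (intro add_mono mult_left_mono) auto
      also have "\<dots> < 2 * pi * e"
        using e pi_gt3 by (simp add: e'_def)
      finally have "norm (G R - c * L) < 2 * pi * e" .
      moreover have "dist (G R / c) L = norm (G R - c * L) / (2 * pi)"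
      proof -
        have "c \<noteq> 0" by (simp add: c_def)
        hence "G R / c - L = (G R - c * L) / c" by (simp add: diff_divide_distrib)
        thus ?thesis by (simp add: dist_norm norm_divide c0)
      qed
      ultimately show "dist (G R / c) L < e"
        by (simp add: divide_less_eq mult.commute)
    qed
  qed
  have "I_loop a mu n u = L"
    unfolding I_loop_def
    by (rule tendsto_Lim[OF trivial_limit_at_top_linorder]) (use lim in \<open>simp add: G_def c_def\<close>)
  thus ?thesis by (simp add: L_def r_def)
qed



lemma inv_fact_sums: "(\<lambda>k. 1 / fact k :: real) sums exp 1"
  using exp_converges[of "1::real"] by (simp add: divide_inverse)

theorem lemma2:
  shows "(\<forall>(a::nat) (mu::nat) (n::nat) (u::real).
            2 \<le> a \<and> mu \<le> a - 2 \<longrightarrow> I_tilde a mu n u = I_loop a mu n u)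
       \<and> (\<exists>C::real. \<forall>(a::nat) (n::nat) (u::real).
            2 \<le> a \<and> 1 \<le> n \<longrightarrow>
              norm (I_tilde a (a - 1) n u - I_loop a (a - 1) n u) \<le> C / real n ^ a)"
proof (intro conjI allI impI)
  fix a mu n :: nat and u :: real
  assume h: "2 \<le> a \<and> mu \<le> a - 2"
  have z: "(\<lambda>k. residue (integrand a mu n u) (- of_nat (Suc k))) = (\<lambda>k. 0)"
    using h by (intro ext residue_neg_zero) auto
  have "I_loop a mu n u = I_tilde a mu n u + (\<Sum>k. residue (integrand a mu n u) (- of_nat (Suc k)))"
  proof (rule main_lim)
    show "1 \<le> a" using h by simp
    show "summable (\<lambda>k. residue (integrand a mu n u) (- of_nat (Suc k)))" unfolding z by simp
  qed
  thus "I_tilde a mu n u = I_loop a mu n u" unfolding z by simp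
next
  show "\<exists>C::real. \<forall>(a::nat) (n::nat) (u::real).
            2 \<le> a \<and> 1 \<le> n \<longrightarrow>
              norm (I_tilde a (a - 1) n u - I_loop a (a - 1) n u) \<le> C / real n ^ a"
  proof (intro exI[of _ "exp 1"] allI impI)
    fix a n :: nat and u :: real
    assume h: "2 \<le> a \<and> 1 \<le> n"
    hence a1: "1 \<le> a" and n1: "1 \<le> n" by auto
    define r where "r = (\<lambda>k. residue (integrand a (a - 1) n u) (- of_nat (Suc k)))"
    define g where "g = (\<lambda>k. (1 / real n) ^ a * (1 / fact k) :: real)"
    have rb: "norm (r k) \<le> g k" for k
      using residue_neg_bound[OF a1 n1, of u k] by (simp add: r_def g_def)
    have gs: "g sums ((1 / real n) ^ a * exp 1)" unfolding g_def by (intro sums_mult inv_fact_sums)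
    have sn: "summable (\<lambda>k. norm (r k))"
      by (rule summable_comparison_test[OF _ sums_summable[OF gs]]) (use rb in auto)
    have sr: "summable r" by (rule summable_norm_cancel[OF sn])
    have "I_loop a (a - 1) n u = I_tilde a (a - 1) n u + suminf r"
      unfolding r_def by (rule main_lim[OF a1 sr[unfolded r_def]])
    hence "norm (I_tilde a (a - 1) n u - I_loop a (a - 1) n u) = norm (suminf r)"
      by (simp add: norm_minus_commute)
    also have "\<dots> \<le> (\<Sum>k. norm (r k))" by (rule summable_norm[OF sn])
    also have "\<dots> \<le> suminf g" by (rule suminf_le[OF rb sn sums_summable[OF gs]])
    also have "\<dots> = (1 / real n) ^ a * exp 1" using gs by (simp add: sums_iff)
    also have "\<dots> = exp 1 / real n ^ a" by (simp add: power_divide)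
    finally show "norm (I_tilde a (a - 1) n u - I_loop a (a - 1) n u) \<le> exp 1 / real n ^ a" .
  qed
qed


end
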